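(* Let $G=(V,E)$ be a finite graph satisfying the $CD\psi(n,-K)$ condition for some $n>0$, $K>0$, where $\psi:(0,+\infty)\to\mathbb R$ is a $C^1$ concave function with $\psi'(1)=0$. Let $\sigma\in\mathbb R$ and $c:[0,\infty)\to\mathbb R$ continuous with either ($c\ge0$, $\sigma\le1$) or ($c\le0$, $\sigma\ge1$), and let $u$ be a positive solution of $\partial_tu=\Delta u+c(t)u^\sigma$ on $V$. Then for all vertices and all $t>0$, $$\Gamma^\psi(u)\le\frac{n}{2t}+Kn.$$
   Context: Graphs: $G=(V,E)$ is a connected, locally finite graph; each edge $xy$ carries a weight $w_{xy}>0$ (possibly asymmetric), and $\mu:V\to(0,\infty)$ is a vertex measure; $y\sim x$ means $xy\in E$. Laplacian: $\Delta f(x)=\frac{1}{\mu(x)}\sum_{y\sim x}w_{xy}(f(y)-f(x))$. For $f:V\to(0,\infty)$: $\Delta^\psi f(x)=\Delta\big[\psi\big(\tfrac{f}{f(x)}\big)\big](x)$; $\overline\psi(s)=\psi'(1)(s-1)-(\psi(s)-\psi(1))$, $\Gamma^\psi f=\Delta^{\overline\psi}f$; $(\Omega^\psi f)(x)=\Delta\big[\psi'\big(\tfrac{f}{f(x)}\big)\tfrac{f}{f(x)}\big(\tfrac{\Delta f}{f}-\tfrac{\Delta f(x)}{f(x)}\big)\big](x)$; $2\Gamma_2^\psi(f)=\Omega^\psi f+\frac{\Delta f\,\Delta^\psi f}{f}-\frac{\Delta(f\Delta^\psi f)}{f}$. $CD\psi(n,K)$: for every $f:V\to(0,\infty)$ and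 every vertex, $\Gamma_2^\psi(f)\ge\frac1n(\Delta^\psi f)^2+K\Gamma^\psi(f)$. A positive solution $u:V\times[0,\infty)\to(0,\infty)$ is continuously differentiable in $t$; operators are applied to $u(\cdot,t)$ at each fixed time. *)

theory Defs
  imports "HOL-Analysis.Analysis"
begin

definition finite_weighted_graph ::
  "'v set \<Rightarrow> ('v \<Rightarrow> 'v \<Rightarrow> bool) \<Rightarrow> ('v \<Rightarrow> 'v \<Rightarrow> real) \<Rightarrow> ('v \<Rightarrow> real) \<Rightarrow> bool" where
  "finite_weighted_graph V adj w mu \<longleftrightarrow>
     finite V \<and>
     (\<forall>x y. adj x y \<longrightarrow> x \<in> V \<and> y \<in> V) \<and>
     (\<forall>x y. adj x y \<longrightarrow> adj y x) \<and>
     (\<forall>x. \<not> adj x x) \<and>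
     (\<forall>x y. adj x y \<longrightarrow> w x y > 0) \<and>
     (\<forall>x\<in>V. mu x > 0) \<and>
     (\<forall>x\<in>V. \<forall>y\<in>V. adj\<^sup>*\<^sup>* x y)"

definition lap ::
  "'v set \<Rightarrow> ('v \<Rightarrow> 'v \<Rightarrow> bool) \<Rightarrow> ('v \<Rightarrow> 'v \<Rightarrow> real) \<Rightarrow> ('v \<Rightarrow> real) \<Rightarrow> ('v \<Rightarrow> real) \<Rightarrow> 'v \<Rightarrow> real" where
  "lap V adj w mu f x = (1 / mu x) * (\<Sum>y\<in>{y\<in>V. adj x y}. w x y * (f y - f x))"

definition lap_psi ::
  "'v set \<Rightarrow> ('v \<Rightarrow> 'v \<Rightarrow> bool) \<Rightarrow> ('v \<Rightarrow> 'v \<Rightarrow> real) \<Rightarrow> ('v \<Rightarrow> real) \<Rightarrow> (real \<Rightarrow> real)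
    \<Rightarrow> ('v \<Rightarrow> real) \<Rightarrow> 'v \<Rightarrow> real" where
  "lap_psi V adj w mu \<psi> f x = lap V adj w mu (\<lambda>y. \<psi> (f y / f x)) x"

definition psi_bar :: "(real \<Rightarrow> real) \<Rightarrow> real \<Rightarrow> real" where
  "psi_bar \<psi> s = deriv \<psi> 1 * (s - 1) - (\<psi> s - \<psi> 1)"

definition Gamma_psi ::
  "'v set \<Rightarrow> ('v \<Rightarrow> 'v \<Rightarrow> bool) \<Rightarrow> ('v \<Rightarrow> 'v \<Rightarrow> real) \<Rightarrow> ('v \<Rightarrow> real) \<Rightarrow> (real \<Rightarrow> real)
    \<Rightarrow> ('v \<Rightarrow> real) \<Rightarrow> 'v \<Rightarrow> real" where
  "Gamma_psi V adj w mu \<psi> f x = lap_psi V adj w mu (psi_bar \<psi>) f x"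

definition Omega_psi ::
  "'v set \<Rightarrow> ('v \<Rightarrow> 'v \<Rightarrow> bool) \<Rightarrow> ('v \<Rightarrow> 'v \<Rightarrow> real) \<Rightarrow> ('v \<Rightarrow> real) \<Rightarrow> (real \<Rightarrow> real)
    \<Rightarrow> ('v \<Rightarrow> real) \<Rightarrow> 'v \<Rightarrow> real" where
  "Omega_psi V adj w mu \<psi> f x =
     lap V adj w mu (\<lambda>y. deriv \<psi> (f y / f x) * (f y / f x) *
        (lap V adj w mu f y / f y - lap V adj w mu f x / f x)) x"

definition Gamma2_psi ::
  "'v set \<Rightarrow> ('v \<Rightarrow> 'v \<Rightarrow> bool) \<Rightarrow> ('v \<Rightarrow> 'v \<Rightarrow> real) \<Rightarrow> ('v \<Rightarrow> real) \<Rightarrow> (real \<Rightarrow> real)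
    \<Rightarrow> ('v \<Rightarrow> real) \<Rightarrow> 'v \<Rightarrow> real" where
  "Gamma2_psi V adj w mu \<psi> f x =
     (Omega_psi V adj w mu \<psi> f x
      + lap V adj w mu f x * lap_psi V adj w mu \<psi> f x / f x
      - lap V adj w mu (\<lambda>y. f y * lap_psi V adj w mu \<psi> f y) x / f x) / 2"

definition CD_psi ::
  "'v set \<Rightarrow> ('v \<Rightarrow> 'v \<Rightarrow> bool) \<Rightarrow> ('v \<Rightarrow> 'v \<Rightarrow> real) \<Rightarrow> ('v \<Rightarrow> real) \<Rightarrow> (real \<Rightarrow> real)
    \<Rightarrow> real \<Rightarrow> real \<Rightarrow> bool" where
  "CD_psi V adj w mu \<psi> n K \<longleftrightarrow>
     (\<forall>f. (\<forall>x\<in>V. f x > 0) \<longrightarrow>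
        (\<forall>x\<in>V. Gamma2_psi V adj w mu \<psi> f x
                 \<ge> (1 / n) * (lap_psi V adj w mu \<psi> f x)\<^sup>2 + K * Gamma_psi V adj w mu \<psi> f x))"

end

theory Submission
  imports Defs
begin

lemma psi_sign:
  fixes \<psi> :: "real \<Rightarrow> real"
  assumes psi_diff: "\<forall>s>0. \<psi> differentiable (at s)"
    and psi_concave: "concave_on {0<..} \<psi>"
    and psi_d1: "deriv \<psi> 1 = 0" and s: "s > 0"
  shows "deriv \<psi> s * (1 - s) \<ge> 0"
proof -
  have cv: "convex_on {0<..} (\<lambda>x. - \<psi> x)" using psi_concave by (simp add: concave_on_def)
  have d: "((\<lambda>x. - \<psi> x) has_field_derivative - deriv \<psi> r) (at r within {0<..})" if "r > 0" for r
    using psi_diff that by (auto intro!: derivative_eq_intros simp: DERIV_deriv_iff_real_differentiable[symmetric] has_field_derivative_at_within)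
  have "(- \<psi> 1) - (- \<psi> s) \<ge> (- deriv \<psi> s) * (1 - s)"
    by (rule convex_on_imp_above_tangent[OF cv]) (use s d[OF s] in \<open>auto simp: interior_open\<close>)
  moreover have "(- \<psi> s) - (- \<psi> 1) \<ge> (- deriv \<psi> 1) * (s - 1)"
    by (rule convex_on_imp_above_tangent[OF cv]) (use s d[of 1] in \<open>auto simp: interior_open\<close>)
  ultimately show ?thesis using psi_d1 by simp
qed

lemma react_sign:
  fixes \<psi> :: "real \<Rightarrow> real"
  assumes psi_diff: "\<forall>s>0. \<psi> differentiable (at s)"
    and psi_concave: "concave_on {0<..} \<psi>"
    and psi_d1: "deriv \<psi> 1 = 0" and a: "a > 0" and b: "b > 0"
    and cs: "(cc \<ge> 0 \<and> \<sigma> \<le> 1) \<or> (cc \<le> 0 \<and> \<sigma> \<ge> 1)"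
  shows "deriv \<psi> (a/b) * (a/b) * (cc * (a powr \<sigma> / a - b powr \<sigma> / b)) \<ge> 0"
proof -
  have g: "a/b > 0" using a b by simp
  have P: "deriv \<psi> (a/b) * (1 - a/b) \<ge> 0" by (rule psi_sign[OF psi_diff psi_concave psi_d1 g])
  have ea: "a powr \<sigma> / a = a powr (\<sigma> - 1)" using a by (simp add: powr_diff)
  have eb: "b powr \<sigma> / b = b powr (\<sigma> - 1)" using b by (simp add: powr_diff)
  define d where "d = a powr (\<sigma> - 1) - b powr (\<sigma> - 1)"
  have "deriv \<psi> (a/b) * (cc * d) \<ge> 0"
  proof (cases a b rule: linorder_cases)
    case less
    then have "1 - a/b > 0" using b by (simp add: field_simps)
    then have p: "deriv \<psi> (a/b) \<ge> 0" using P by (simp add: zero_le_mult_iff)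
    have "cc * d \<ge> 0"
    proof (cases "cc \<ge> 0 \<and> \<sigma> \<le> 1")
      case True
      then have "d \<ge> 0" unfolding d_def using powr_mono2'[of "\<sigma> - 1" a b] a less by simp
      then show ?thesis using True by simp
    next
      case False
      then have F: "cc \<le> 0" "\<sigma> \<ge> 1" using cs by auto
      then have "d \<le> 0" unfolding d_def using powr_mono2[of "\<sigma> - 1" a b] a less by simp
      then show ?thesis using F by (simp add: mult_nonpos_nonpos)
    qed
    then show ?thesis using p by simp
  next
    case equal then show ?thesis by (simp add: d_def)
  next
    case greater
    then have "1 - a/b < 0" using b by (simp add: field_simps)
    then have p: "deriv \<psi> (a/b) \<le> 0" using P by (simp add: zero_le_mult_iff)
    have "cc * d \<le> 0"
    proof (cases "cc \<ge> 0 \<and> \<sigma> \<le> 1")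
      case True
      then have "d \<le> 0" unfolding d_def using powr_mono2'[of "\<sigma> - 1" b a] b greater by simp
      then show ?thesis using True by (simp add: mult_nonneg_nonpos)
    next
      case False
      then have F: "cc \<le> 0" "\<sigma> \<ge> 1" using cs by auto
      then have "d \<ge> 0" unfolding d_def using powr_mono2[of "\<sigma> - 1" b a] b greater by simp
      then show ?thesis using F by (simp add: mult_nonpos_nonneg)
    qed
    then show ?thesis using p by (simp add: mult_nonpos_nonpos)
  qed
  then show ?thesis using g unfolding ea eb d_def[symmetric]
    by (metis mult.assoc mult.commute mult_nonneg_nonneg less_imp_le)
qed

lemma psi_term_deriv:
  fixes \<psi> :: "real \<Rightarrow> real"
  assumes psi_diff: "\<forall>s>0. \<psi> differentiable (at s)"
    and ay: "(ay has_real_derivative dy) (at t within S)"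
    and ax: "(ax has_real_derivative dx) (at t within S)"
    and py: "ay t > 0" and px: "ax t > 0"
  shows "((\<lambda>s. \<psi> (ay s / ax s)) has_real_derivative
           deriv \<psi> (ay t / ax t) * ((dy * ax t - ay t * dx) / (ax t * ax t))) (at t within S)"
proof -
  have "(\<psi> has_real_derivative deriv \<psi> (ay t / ax t)) (at (ay t / ax t))"
    using psi_diff py px by (simp add: DERIV_deriv_iff_real_differentiable)
  moreover have "((\<lambda>s. ay s / ax s) has_real_derivative ((dy * ax t - ay t * dx) / (ax t * ax t))) (at t within S)"
    using DERIV_divide[OF ay ax] px by simp
  ultimately show ?thesis by (rule DERIV_chain2)
qed

lemma Gamma_deriv:
  fixes V :: "'v set" and \<psi> :: "real \<Rightarrow> real" and u :: "'v \<Rightarrow> real \<Rightarrow> real"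
  assumes psi_diff: "\<forall>s>0. \<psi> differentiable (at s)"
    and psi_d1: "deriv \<psi> 1 = 0"
    and x: "x \<in> V"
    and pos: "\<forall>y\<in>V. u y t > 0"
    and der: "\<forall>y\<in>V. ((\<lambda>s. u y s) has_real_derivative ud y) (at t within S)"
  shows "((\<lambda>s. Gamma_psi V adj w mu \<psi> (\<lambda>y. u y s) x) has_real_derivative
     (1 / mu x) * (\<Sum>y\<in>{y\<in>V. adj x y}. w x y *
        (- deriv \<psi> (u y t / u x t) * ((ud y * u x t - u y t * ud x) / (u x t * u x t))))) (at t within S)"
proof -
  have td: "((\<lambda>s. \<psi> (u y s / u x s)) has_real_derivative
           deriv \<psi> (u y t / u x t) * ((ud y * u x t - u y t * ud x) / (u x t * u x t))) (at t within S)"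
    if "y \<in> V" for y
    by (rule psi_term_deriv[OF psi_diff]) (use der pos x that in auto)
  have tx: "((\<lambda>s. \<psi> (u x s / u x s)) has_real_derivative 0) (at t within S)"
    using td[OF x] pos x psi_d1 by simp
  have eq: "(\<lambda>s. Gamma_psi V adj w mu \<psi> (\<lambda>y. u y s) x) =
     (\<lambda>s. (1 / mu x) * (\<Sum>y\<in>{y\<in>V. adj x y}. w x y * (\<psi> (u x s / u x s) - \<psi> (u y s / u x s))))"
    by (simp add: Gamma_psi_def lap_psi_def psi_bar_def lap_def psi_d1)
  show ?thesis unfolding eq
    apply (rule DERIV_cmult)
    apply (rule DERIV_sum)
    apply (rule DERIV_cmult)
    using tx td by (auto intro!: derivative_eq_intros)
qed

lemma Gamma_neg_lap_psi:
  assumes psi_d1: "deriv \<psi> 1 = 0"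
  shows "Gamma_psi V adj w mu \<psi> f y = - lap_psi V adj w mu \<psi> f y"
proof -
  have "\<And>z. (0::real) * (z - 1) - (\<psi> z - \<psi> 1) = \<psi> 1 - \<psi> z" by simp
  have "(\<Sum>z\<in>{z\<in>V. adj y z}. w y z * ((\<psi> 1 - \<psi> (f z / f y)) - (\<psi> 1 - \<psi> (f y / f y))))
      = - (\<Sum>z\<in>{z\<in>V. adj y z}. w y z * (\<psi> (f z / f y) - \<psi> (f y / f y)))"
    by (simp add: sum_negf[symmetric] algebra_simps)
  then show ?thesis by (simp add: Gamma_psi_def lap_psi_def psi_bar_def lap_def psi_d1)
qed

lemma key_ineq:
  fixes V :: "'v set" and \<psi> :: "real \<Rightarrow> real" and f :: "'v \<Rightarrow> real"
  assumes G: "finite_weighted_graph V adj w mu"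
    and n_pos: "n > 0"
    and CD: "CD_psi V adj w mu \<psi> n (- K)"
    and psi_diff: "\<forall>s>0. \<psi> differentiable (at s)"
    and psi_concave: "concave_on {0<..} \<psi>"
    and psi_d1: "deriv \<psi> 1 = 0"
    and cs: "(cc \<ge> 0 \<and> \<sigma> \<le> 1) \<or> (cc \<le> 0 \<and> \<sigma> \<ge> 1)"
    and fpos: "\<forall>y\<in>V. f y > 0"
    and x: "x \<in> V"
    and mx: "\<forall>y\<in>V. Gamma_psi V adj w mu \<psi> f y \<le> Gamma_psi V adj w mu \<psi> f x"
    and ud: "\<And>y. ud y = lap V adj w mu f y + cc * f y powr \<sigma>"
  shows "(1 / mu x) * (\<Sum>y\<in>{y\<in>V. adj x y}. w x y *
        (- deriv \<psi> (f y / f x) * ((ud y * f x - f y * ud x) / (f x * f x))))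
      \<le> - (2 / n) * (Gamma_psi V adj w mu \<psi> f x)\<^sup>2 + 2 * K * Gamma_psi V adj w mu \<psi> f x"
proof -
  let ?N = "{y\<in>V. adj x y}"
  let ?L = "lap V adj w mu f"
  let ?Ga = "Gamma_psi V adj w mu \<psi> f"
  let ?lp = "lap_psi V adj w mu \<psi> f"
  have fin: "finite ?N" using G unfolding finite_weighted_graph_def by auto
  have mux: "mu x > 0" using G x unfolding finite_weighted_graph_def by auto
  have wpos: "w x y > 0" if "y \<in> ?N" for y using G that unfolding finite_weighted_graph_def by auto
  have fx: "f x > 0" using fpos x by auto
  define \<phi> where "\<phi> y = deriv \<psi> (f y / f x) * (f y / f x) * (?L y / f y - ?L x / f x)" for y
  define r where "r y = deriv \<psi> (f y / f x) * (f y / f x) * (cc * (f y powr \<sigma> / f y - f x powr \<sigma> / f x))" for y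
  have Om: "Omega_psi V adj w mu \<psi> f x = (1 / mu x) * (\<Sum>y\<in>?N. w x y * \<phi> y)"
    by (simp add: Omega_psi_def lap_def \<phi>_def)
  have trm: "w x y * (- deriv \<psi> (f y / f x) * ((ud y * f x - f y * ud x) / (f x * f x)))
      = - (w x y * \<phi> y) - w x y * r y" if "y \<in> ?N" for y
  proof -
    have fy: "f y > 0" using that fpos by auto
    show ?thesis unfolding \<phi>_def r_def ud using fy fx
      by (simp add: field_simps)
  qed
  have rnn: "w x y * r y \<ge> 0" if "y \<in> ?N" for y
  proof -
    have fy: "f y > 0" using that fpos by auto
    have "r y \<ge> 0" unfolding r_def by (rule react_sign[OF psi_diff psi_concave psi_d1 fy fx cs])
    then show ?thesis using wpos[OF that] by simp
  qed
  have D: "(1 / mu x) * (\<Sum>y\<in>?N. w x y *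
        (- deriv \<psi> (f y / f x) * ((ud y * f x - f y * ud x) / (f x * f x))))
      = - Omega_psi V adj w mu \<psi> f x - (1 / mu x) * (\<Sum>y\<in>?N. w x y * r y)"
  proof -
    have "(\<Sum>y\<in>?N. w x y *
        (- deriv \<psi> (f y / f x) * ((ud y * f x - f y * ud x) / (f x * f x))))
      = (\<Sum>y\<in>?N. - (w x y * \<phi> y) - w x y * r y)"
      by (rule sum.cong[OF refl], rule trm)
    also have "\<dots> = - (\<Sum>y\<in>?N. w x y * \<phi> y) - (\<Sum>y\<in>?N. w x y * r y)"
      by (simp add: sum_subtractf sum_negf)
    finally have E: "(\<Sum>y\<in>?N. w x y *
        (- deriv \<psi> (f y / f x) * ((ud y * f x - f y * ud x) / (f x * f x))))
       = - (\<Sum>y\<in>?N. w x y * \<phi> y) - (\<Sum>y\<in>?N. w x y * r y)" .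
    show ?thesis unfolding Om E by (simp add: right_diff_distrib)
  qed
  have R: "(1 / mu x) * (\<Sum>y\<in>?N. w x y * r y) \<ge> 0"
  proof -
    have "(\<Sum>y\<in>?N. w x y * r y) \<ge> 0" using rnn by (rule sum_nonneg)
    then show ?thesis using mux by simp
  qed
  have lpG: "\<And>y. ?lp y = - ?Ga y" using Gamma_neg_lap_psi[OF psi_d1, of V adj w mu f] by simp
  have Lfl: "lap V adj w mu (\<lambda>y. f y * ?lp y) x = (1 / mu x) * (\<Sum>y\<in>?N. w x y * (f x * ?Ga x - f y * ?Ga y))"
    by (simp add: lap_def lpG algebra_simps)
  have "(\<Sum>y\<in>?N. w x y * (f x * ?Ga x - f y * ?Ga y)) \<ge> (\<Sum>y\<in>?N. w x y * (f x * ?Ga x - f y * ?Ga x))"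
  proof (rule sum_mono)
    fix y assume y: "y \<in> ?N"
    have "f y * ?Ga y \<le> f y * ?Ga x" using mx y fpos by (auto intro: mult_left_mono)
    then show "w x y * (f x * ?Ga x - f y * ?Ga x) \<le> w x y * (f x * ?Ga x - f y * ?Ga y)"
      using wpos[OF y] by (intro mult_left_mono) auto
  qed
  moreover have "(\<Sum>y\<in>?N. w x y * (f x * ?Ga x - f y * ?Ga x)) = - ?Ga x * (mu x * ?L x)"
    using mux by (simp add: lap_def sum_distrib_left sum_negf[symmetric] algebra_simps)
  ultimately have "lap V adj w mu (\<lambda>y. f y * ?lp y) x \<ge> - ?Ga x * ?L x"
    unfolding Lfl using mux by (simp add: field_simps)
  then have "lap V adj w mu (\<lambda>y. f y * ?lp y) x / f x \<ge> - ?Ga x * ?L x / f x"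
    using fx divide_right_mono[of "- ?Ga x * ?L x" _ "f x"] by simp
  then have H: "0 \<le> lap V adj w mu (\<lambda>y. f y * ?lp y) x / f x + ?Ga x * ?L x / f x" by linarith
  have e: "?L x * ?lp x / f x = - (?Ga x * ?L x / f x)" using lpG[of x] by simp
  have G2: "2 * Gamma2_psi V adj w mu \<psi> f x \<le> Omega_psi V adj w mu \<psi> f x"
    unfolding Gamma2_psi_def e using H by argo
  have cd: "Gamma2_psi V adj w mu \<psi> f x \<ge> (1 / n) * (?lp x)\<^sup>2 + (- K) * ?Ga x"
    using CD fpos x unfolding CD_psi_def by blast
  have "(2 / n) * (?Ga x)\<^sup>2 - 2 * K * ?Ga x \<le> 2 * Gamma2_psi V adj w mu \<psi> f x"
    using cd lpG[of x] by simp
  then show ?thesis unfolding D using R G2 by simp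
qed

theorem mainTheorem13:
  fixes V :: "'v set" and adj :: "'v \<Rightarrow> 'v \<Rightarrow> bool" and w :: "'v \<Rightarrow> 'v \<Rightarrow> real"
    and mu :: "'v \<Rightarrow> real" and \<psi> :: "real \<Rightarrow> real" and n K \<sigma> :: real
    and c :: "real \<Rightarrow> real" and u :: "'v \<Rightarrow> real \<Rightarrow> real"
  assumes G: "finite_weighted_graph V adj w mu"
    and n_pos: "n > 0" and K_pos: "K > 0"
    and CD: "CD_psi V adj w mu \<psi> n (- K)"
    and psi_diff: "\<forall>s>0. \<psi> differentiable (at s)"
    and psi_C1: "continuous_on {0<..} (deriv \<psi>)"
    and psi_concave: "concave_on {0<..} \<psi>"
    and psi_d1: "deriv \<psi> 1 = 0"
    and c_cont: "continuous_on {0..} c"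
    and c_sigma: "((\<forall>t\<ge>0. c t \<ge> 0) \<and> \<sigma> \<le> 1) \<or> ((\<forall>t\<ge>0. c t \<le> 0) \<and> \<sigma> \<ge> 1)"
    and u_pos: "\<forall>x\<in>V. \<forall>t\<ge>0. u x t > 0"
    and u_C1: "\<forall>x\<in>V. continuous_on {0..} (\<lambda>t. lap V adj w mu (\<lambda>y. u y t) x + c t * u x t powr \<sigma>)"
    and u_eq: "\<forall>x\<in>V. \<forall>t\<ge>0. ((\<lambda>s. u x s) has_real_derivative
                 (lap V adj w mu (\<lambda>y. u y t) x + c t * u x t powr \<sigma>)) (at t within {0..})"
  shows "\<forall>x\<in>V. \<forall>t>0. Gamma_psi V adj w mu \<psi> (\<lambda>y. u y t) x \<le> n / (2 * t) + K * n"
proof -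
  define Ga where "Ga x t = Gamma_psi V adj w mu \<psi> (\<lambda>y. u y t) x" for x t
  define h where "h t = n / (2 * t) + K * n" for t :: real
  define ud where "ud t y = lap V adj w mu (\<lambda>z. u z t) y + c t * u y t powr \<sigma>" for t y
  define D where "D x t = (1 / mu x) * (\<Sum>y\<in>{y\<in>V. adj x y}. w x y *
        (- deriv \<psi> (u y t / u x t) * ((ud t y * u x t - u y t * ud t x) / (u x t * u x t))))" for x t
  have derw: "((\<lambda>s. Ga x s) has_real_derivative D x t) (at t within {0..})"
    if x: "x \<in> V" and t: "t \<ge> 0" for x t
  proof -
    have p: "\<forall>y\<in>V. u y t > 0" using u_pos t by blast
    have q: "\<forall>y\<in>V. ((\<lambda>s. u y s) has_real_derivative ud t y) (at t within {0..})"
      unfolding ud_def using u_eq t by blast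
    show ?thesis unfolding Ga_def D_def by (rule Gamma_deriv[OF psi_diff psi_d1 x p q])
  qed
  have dera: "((\<lambda>s. Ga x s) has_real_derivative D x t) (at t)"
    if x: "x \<in> V" and t: "t > 0" for x t
  proof -
    have sub: "{0<..} \<subseteq> {0::real..}" by auto
    have e: "at t within {0<..} = at t" by (rule at_within_open) (use t in auto)
    have "((\<lambda>s. Ga x s) has_real_derivative D x t) (at t within {0<..})"
      using DERIV_subset[OF derw[OF x] sub] t by simp
    then show ?thesis unfolding e .
  qed
  have cont: "continuous_on {0..} (Ga x)" if x: "x \<in> V" for x
  proof -
    have "\<And>t. t \<in> {0..} \<Longrightarrow> (Ga x has_field_derivative D x t) (at t within {0..})"
      using derw[OF x] by simp
    then show ?thesis by (rule DERIV_continuous_on)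
  qed
  have keyD: "D x t \<le> - (2 / n) * (Ga x t)\<^sup>2 + 2 * K * Ga x t"
    if x: "x \<in> V" and t: "t > 0" and mx: "\<forall>y\<in>V. Ga y t \<le> Ga x t" for x t
  proof -
    have t': "t \<ge> 0" using t by simp
    have cs: "(c t \<ge> 0 \<and> \<sigma> \<le> 1) \<or> (c t \<le> 0 \<and> \<sigma> \<ge> 1)"
      using c_sigma t' by blast
    have p: "\<forall>y\<in>V. u y t > 0" using u_pos t' by blast
    have mx': "\<forall>y\<in>V. Gamma_psi V adj w mu \<psi> (\<lambda>y. u y t) y \<le> Gamma_psi V adj w mu \<psi> (\<lambda>y. u y t) x"
      using mx unfolding Ga_def .
    show ?thesis unfolding D_def Ga_def
      by (rule key_ineq[OF G n_pos CD psi_diff psi_concave psi_d1 cs p x mx']) (simp add: ud_def)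
  qed
  show ?thesis
  proof (intro ballI allI impI, rule ccontr)
    fix x0 and t0 :: real assume x0: "x0 \<in> V" and t0: "t0 > 0"
    assume "\<not> Gamma_psi V adj w mu \<psi> (\<lambda>y. u y t0) x0 \<le> n / (2 * t0) + K * n"
    then have bad: "Ga x0 t0 > h t0" unfolding Ga_def h_def by simp
    have "\<exists>B. \<forall>t\<in>{0..t0}. Ga x t \<le> B" if x: "x \<in> V" for x
    proof -
      have "continuous_on {0..t0} (Ga x)" using cont[OF x] by (rule continuous_on_subset) auto
      then obtain s where "s \<in> {0..t0}" "\<forall>y\<in>{0..t0}. Ga x y \<le> Ga x s"
        using continuous_attains_sup[of "{0..t0}" "Ga x"] t0 by auto
      then show ?thesis by blast
    qed
    then obtain Bf where Bf: "\<forall>x\<in>V. \<forall>t\<in>{0..t0}. Ga x t \<le> Bf x" by metis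
    have finV: "finite V" using G unfolding finite_weighted_graph_def by auto
    define B where "B = (\<Sum>x\<in>V. \<bar>Bf x\<bar>) + 1"
    have Bpos: "B > 0" unfolding B_def by (simp add: sum_nonneg add_nonneg_pos)
    have Bb: "Ga x t \<le> B" if "x \<in> V" "t \<in> {0..t0}" for x t
    proof -
      have "\<bar>Bf x\<bar> \<le> (\<Sum>x\<in>V. \<bar>Bf x\<bar>)" by (rule member_le_sum) (use that finV in auto)
      then show ?thesis using Bf that unfolding B_def by force
    qed
    define \<delta> where "\<delta> = min (t0 / 2) (n / (2 * B))"
    have dpos: "\<delta> > 0" unfolding \<delta>_def using t0 n_pos Bpos by simp
    have dlt: "\<delta> < t0" unfolding \<delta>_def using t0 by simp
    have hd: "h \<delta> > B"
    proof -
      have "\<delta> \<le> n / (2 * B)" unfolding \<delta>_def by simp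
      then have "2 * B * \<delta> \<le> n" using Bpos by (simp add: field_simps)
      then have "B \<le> n / (2 * \<delta>)" using dpos by (simp add: field_simps)
      then show ?thesis unfolding h_def using K_pos n_pos by (smt (verit) mult_pos_pos)
    qed
    have dgood: "Ga x \<delta> < h \<delta>" if "x \<in> V" for x using Bb[OF that, of \<delta>] dpos dlt hd by auto
    define T where "T = {t\<in>{\<delta>..t0}. \<exists>x\<in>V. Ga x t \<ge> h t}"
    have hcont: "continuous_on {\<delta>..t0} h" unfolding h_def using dpos
      by (intro continuous_intros) auto
    have Fcont: "continuous_on {\<delta>..t0} (\<lambda>t. Ga x t - h t)" if x: "x \<in> V" for x
    proof -
      have "continuous_on {\<delta>..t0} (Ga x)" using cont[OF x] by (rule continuous_on_subset) (use dpos in auto)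
      then show ?thesis using hcont by (intro continuous_intros)
    qed
    have Teq: "T = (\<Union>x\<in>V. {\<delta>..t0} \<inter> (\<lambda>t. Ga x t - h t) -` {0..})"
      unfolding T_def by auto
    have Tclosed: "closed T" unfolding Teq
      by (intro closed_UN finV ballI continuous_closed_preimage Fcont) auto
    have t0T: "t0 \<in> T" unfolding T_def using x0 bad dlt by (auto intro!: bexI[of _ x0])
    have Tbdd: "bdd_below T" unfolding T_def by (rule bdd_belowI[of _ \<delta>]) auto
    define t1 where "t1 = Inf T"
    have t1T: "t1 \<in> T" unfolding t1_def using closed_contains_Inf[OF _ Tbdd Tclosed] t0T by auto
    have t1le: "t1 \<le> t" if "t \<in> T" for t unfolding t1_def using cInf_lower[OF that Tbdd] .
    from t1T obtain x1 where x1: "x1 \<in> V" and x1h: "Ga x1 t1 \<ge> h t1" and t1r: "t1 \<in> {\<delta>..t0}"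
      unfolding T_def by auto
    have dt1: "\<delta> < t1" using t1r dgood[OF x1] x1h by (cases "t1 = \<delta>") auto
    have below: "Ga y t < h t" if "y \<in> V" "t \<in> {\<delta>..<t1}" for y t
    proof (rule ccontr)
      assume "\<not> Ga y t < h t"
      then have "t \<in> T" unfolding T_def using that t1r by (auto intro!: bexI[of _ y])
      then show False using t1le that by fastforce
    qed
    have atmost: "Ga y t1 - h t1 \<le> 0" if y: "y \<in> V" for y
    proof (rule continuous_le_on_closure[where S="{\<delta>..<t1}" and f="\<lambda>t. Ga y t - h t" and x=t1 and a=0])
      show "continuous_on (closure {\<delta>..<t1}) (\<lambda>t. Ga y t - h t)"
        using dt1 t1r by (auto intro: continuous_on_subset[OF Fcont[OF y]])
      show "t1 \<in> closure {\<delta>..<t1}" using dt1 by simp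
      show "\<And>t. t \<in> {\<delta>..<t1} \<Longrightarrow> Ga y t - h t \<le> 0" using below[OF y] by fastforce
    qed
    have eqh: "Ga x1 t1 = h t1" using atmost[OF x1] x1h by simp
    have mx: "\<forall>y\<in>V. Ga y t1 \<le> Ga x1 t1" using atmost eqh by force
    have t1pos: "t1 > 0" using dt1 dpos by simp
    have kD: "D x1 t1 \<le> - (2 / n) * (h t1)\<^sup>2 + 2 * K * h t1"
      using keyD[OF x1 t1pos mx] eqh by simp
    have alg: "- (2 / n) * (h t1)\<^sup>2 + 2 * K * h t1 = - (n / (2 * t1\<^sup>2)) - K * n / t1"
      unfolding h_def using n_pos t1pos by (simp add: field_simps power2_eq_square)
    have Knt: "K * n / t1 > 0" using K_pos n_pos t1pos by simp
    have hder: "(h has_real_derivative - (n / (2 * t1\<^sup>2))) (at t1)"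
      unfolding h_def using t1pos
      by (auto intro!: derivative_eq_intros simp: field_simps power2_eq_square)
    have Fder: "((\<lambda>t. Ga x1 t - h t) has_real_derivative D x1 t1 - (- (n / (2 * t1\<^sup>2)))) (at t1)"
      by (intro DERIV_diff dera[OF x1 t1pos] hder)
    have neg: "D x1 t1 - (- (n / (2 * t1\<^sup>2))) < 0" using kD alg Knt by linarith
    obtain d where d: "d > 0" and dd: "\<forall>e>0. e < d \<longrightarrow> Ga x1 t1 - h t1 < Ga x1 (t1 - e) - h (t1 - e)"
      using DERIV_neg_dec_left[OF Fder neg] by blast
    define e where "e = min (d / 2) ((t1 - \<delta>) / 2)"
    have e: "e > 0" "e < d" unfolding e_def using d dt1 by auto
    have "e \<le> (t1 - \<delta>) / 2" unfolding e_def by (rule min.cobounded2)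
    then have "t1 - e \<in> {\<delta>..<t1}" using e dt1 by auto
    then have "Ga x1 (t1 - e) - h (t1 - e) < 0" using below[OF x1] by fastforce
    moreover have "Ga x1 t1 - h t1 < Ga x1 (t1 - e) - h (t1 - e)" using dd e by blast
    ultimately show False using eqh by simp
  qed
qed

end
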